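(* Let $n,m,q\ge 1$ and $\beta\in[0,1]$. Let $B_0\in\mathbb{R}^{n\times n}$ be symmetric positive definite and $U=B_0^{1/2}$ its symmetric positive definite square root. Let $X_f\in\mathbb{R}^{n\times m}$ and $P_f=X_fX_f^T$. Let $\hat H\in\mathbb{R}^{q\times n}$ be any real matrix, $\hat R\in\mathbb{R}^{q\times q}$ symmetric positive definite, and $K=\hat H^T\hat R^{-1}\hat H$. Let $U_h=\bigl[\sqrt{1-\beta}\,U\ \ \sqrt{\beta}\,X_f\bigr]\in\mathbb{R}^{n\times(n+m)}$ and $S_{P4D}=I_{n+m}+U_h^TKU_h$. Then \[ 1\le \kappa(S_{P4D})\le 1+\bigl[(1-\beta)\lambda_1(B_0)+\beta\lambda_1(P_f)\bigr]\lambda_1(K). \]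
   Context: For a symmetric matrix $A$ of size $k\times k$, $\lambda_j(A)$ denotes its $j$-th largest eigenvalue ($\lambda_1$ largest, $\lambda_k$ smallest); for symmetric positive definite $A$, $\kappa(A)=\lambda_1(A)/\lambda_k(A)$. In the application, $P_f$ is an ensemble covariance with $X_f$ the scaled ensemble perturbation matrix, and $S_{P4D}$ is the Hessian of hybrid 4D-Var preconditioned by the control variable transform $\delta\boldsymbol{x}=U_h\delta\boldsymbol{v}$. *)

theory Defs
  imports "HOL-Analysis.Analysis"
begin

definition sym_mat :: "real^'n^'n \<Rightarrow> bool" where
  "sym_mat A \<longleftrightarrow> transpose A = A"

definition spd_mat :: "real^'n^'n \<Rightarrow> bool" where
  "spd_mat A \<longleftrightarrow> sym_mat A \<and> (\<forall>x::real^'n. x \<noteq> 0 \<longrightarrow> 0 < x \<bullet> (A *v x))"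

definition eigenvalues :: "real^'n^'n \<Rightarrow> real set" where
  "eigenvalues A = {l. \<exists>v. v \<noteq> 0 \<and> A *v v = l *\<^sub>R v}"

text \<open>Largest / smallest eigenvalue (meaningful for symmetric matrices).\<close>
definition lambda_max :: "real^'n^'n \<Rightarrow> real" where
  "lambda_max A = Max (eigenvalues A)"

definition lambda_min :: "real^'n^'n \<Rightarrow> real" where
  "lambda_min A = Min (eigenvalues A)"

definition cond_num :: "real^'n^'n \<Rightarrow> real" where
  "cond_num A = lambda_max A / lambda_min A"

definition hybrid_Uh :: "real \<Rightarrow> real^'n^'n \<Rightarrow> real^'m^'n \<Rightarrow> real^('n + 'm)^'n" where
  "hybrid_Uh \<beta> U X = (\<chi> i j. case j of Inl k \<Rightarrow> sqrt (1 - \<beta>) * U $ i $ k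
                                      | Inr k \<Rightarrow> sqrt \<beta> * X $ i $ k)"

end

theory Submission imports Defs begin

lemma inner_mat: "(x::real^'a) \<bullet> (A *v y) = (transpose A *v x) \<bullet> y"
  by (simp add: dot_lmul_matrix)

lemma inner_sym: "transpose A = A \<Longrightarrow> (x::real^'a) \<bullet> (A *v y) = (A *v x) \<bullet> y"
  by (metis inner_mat)

lemma quad_arg:
  fixes b c :: real
  assumes "b \<ge> 0" "\<And>t. 2 * t * b + t^2 * c \<le> 0"
  shows "b = 0"
proof (rule ccontr)
  assume "b \<noteq> 0" hence bp: "b > 0" using assms by simp
  define t where "t = b / (\<bar>c\<bar> + 1)"
  have tp: "t > 0" using bp by (simp add: t_def)
  have "t * \<bar>c\<bar> < b" unfolding t_def using bp
    by (simp add: field_simps)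
  moreover have "t * (- \<bar>c\<bar>) \<le> t * c" using tp by (intro mult_left_mono) auto
  ultimately have "t * c > - b" by simp
  hence "t * (2*b + t*c) > 0" using tp bp by (intro mult_pos_pos) auto
  moreover have "t * (2*b + t*c) = 2 * t * b + t^2 * c" by (simp add: algebra_simps power2_eq_square)
  ultimately show False using assms(2)[of t] by simp
qed

lemma rayleigh_max:
  fixes A :: "real^'n::finite^'n"
  assumes sym: "transpose A = A"
  shows "\<exists>l u. u \<noteq> 0 \<and> A *v u = l *\<^sub>R u \<and> (\<forall>x. x \<bullet> (A *v x) \<le> l * (x \<bullet> x))"
proof -
  let ?f = "\<lambda>x::real^'n. x \<bullet> (A *v x)"
  have ne: "sphere (0::real^'n) 1 \<noteq> {}"
    using vector_choose_size[of 1] by auto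
  have cont: "continuous_on (sphere 0 1) ?f"
    by (intro continuous_on_inner continuous_on_id linear_continuous_on)
       (simp add: linear_conv_bounded_linear[symmetric])
  obtain u where u: "u \<in> sphere 0 1" and umax: "\<And>y. y \<in> sphere 0 1 \<Longrightarrow> ?f y \<le> ?f u"
    using continuous_attains_sup[OF compact_sphere ne cont] by blast
  define l where "l = ?f u"
  have nu: "norm u = 1" using u by simp
  hence uu: "u \<bullet> u = 1" by (simp add: dot_square_norm)
  have bound: "?f x \<le> l * (x \<bullet> x)" for x
  proof (cases "x = 0")
    case True then show ?thesis by simp
  next
    case False
    define y where "y = (1 / norm x) *\<^sub>R x"
    have "y \<in> sphere 0 1" using False by (simp add: y_def)
    hence "?f y \<le> l" using umax l_def by simp
    moreover have "?f x = (norm x)^2 * ?f y" using False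
      by (simp add: y_def matrix_vector_mult_scaleR power2_eq_square)
    moreover have "x \<bullet> x = (norm x)^2" by (simp add: dot_square_norm)
    ultimately show ?thesis
      by (metis mult.commute mult_right_mono zero_le_power2)
  qed
  define r where "r = A *v u - l *\<^sub>R u"
  define c where "c = r \<bullet> (A *v r) - l * (r \<bullet> r)"
  have "2 * t * (r \<bullet> r) + t^2 * c \<le> 0" for t
  proof -
    have "?f (u + t *\<^sub>R r) - l * ((u + t *\<^sub>R r) \<bullet> (u + t *\<^sub>R r)) \<le> 0"
      using bound[of "u + t *\<^sub>R r"] by simp
    moreover have s1: "u \<bullet> (A *v r) = r \<bullet> (A *v u)"
      by (metis inner_sym[OF sym] inner_commute)
    have "?f (u + t *\<^sub>R r) = ?f u + 2*t*(r \<bullet> (A *v u)) + t^2 * (r \<bullet> (A *v r))"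
      using s1 by (simp add: algebra_simps inner_add_left inner_add_right power2_eq_square matrix_vector_mult_scaleR)
    moreover have "(u + t *\<^sub>R r) \<bullet> (u + t *\<^sub>R r) = 1 + 2*t*(r \<bullet> u) + t^2*(r \<bullet> r)"
      using uu by (simp add: algebra_simps inner_add_left inner_add_right power2_eq_square inner_commute)
    moreover have "r \<bullet> r = r \<bullet> (A *v u) - l * (r \<bullet> u)"
      by (simp add: r_def inner_diff_right)
    ultimately have "l + 2*t*(r \<bullet> (A *v u)) + t^2 * (r \<bullet> (A *v r)) - l * (1 + 2*t*(r \<bullet> u) + t^2*(r \<bullet> r)) \<le> 0"
      by (simp add: l_def)
    moreover have "l + 2*t*(r \<bullet> (A *v u)) + t^2 * (r \<bullet> (A *v r)) - l * (1 + 2*t*(r \<bullet> u) + t^2*(r \<bullet> r))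
       = 2*t*(r \<bullet> (A *v u) - l * (r \<bullet> u)) + t^2 * c" by (simp add: c_def algebra_simps)
    ultimately show ?thesis using \<open>r \<bullet> r = r \<bullet> (A *v u) - l * (r \<bullet> u)\<close> by simp
  qed
  hence "r \<bullet> r = 0" by (intro quad_arg) auto
  hence "A *v u = l *\<^sub>R u" by (simp add: r_def)
  moreover have "u \<noteq> 0" using nu by auto
  ultimately show ?thesis using bound by blast
qed


lemma eig_finite:
  fixes A :: "real^'n::finite^'n"
  assumes sym: "transpose A = A"
  shows "finite (eigenvalues A)"
proof -
  define E where "E = eigenvalues A"
  define f where "f e = (SOME v. v \<noteq> 0 \<and> A *v v = e *\<^sub>R v)" for e
  have fE: "f e \<noteq> 0 \<and> A *v f e = e *\<^sub>R f e" if "e \<in> E" for e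
    using someI_ex[of "\<lambda>v. v \<noteq> 0 \<and> A *v v = e *\<^sub>R v"] that unfolding E_def eigenvalues_def f_def by auto
  have inj: "inj_on f E"
  proof (rule inj_onI)
    fix a b assume a: "a \<in> E" and b: "b \<in> E" and eq: "f a = f b"
    have "a *\<^sub>R f a = b *\<^sub>R f a" using fE[OF a] fE[OF b] eq by metis
    thus "a = b" using fE[OF a] by simp
  qed
  have "pairwise orthogonal (f ` E)"
  proof (rule pairwiseI, clarify)
    fix a b assume a: "a \<in> E" and b: "b \<in> E" and ne: "f a \<noteq> f b"
    have "a \<noteq> b" using ne by auto
    have "a * (f a \<bullet> f b) = (A *v f a) \<bullet> f b" using fE[OF a] by simp
    also have "\<dots> = f a \<bullet> (A *v f b)" using inner_sym[OF sym] by metis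
    also have "\<dots> = b * (f a \<bullet> f b)" using fE[OF b] by simp
    finally have "(a - b) * (f a \<bullet> f b) = 0" by (simp add: algebra_simps)
    thus "orthogonal (f a) (f b)" using \<open>a \<noteq> b\<close> by (simp add: orthogonal_def)
  qed
  moreover have "0 \<notin> f ` E" using fE by auto
  ultimately have "independent (f ` E)" by (rule pairwise_orthogonal_independent)
  hence "finite (f ` E)" using independent_bound by blast
  thus ?thesis using finite_imageD[OF _ inj] E_def by simp
qed

lemma lmax_props:
  fixes A :: "real^'n::finite^'n"
  assumes sym: "transpose A = A"
  shows "lambda_max A \<in> eigenvalues A \<and> (\<forall>x. x \<bullet> (A *v x) \<le> lambda_max A * (x \<bullet> x))"
proof -
  obtain l u where u: "u \<noteq> 0" "A *v u = l *\<^sub>R u" and b: "\<forall>x. x \<bullet> (A *v x) \<le> l * (x \<bullet> x)"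
    using rayleigh_max[OF sym] by blast
  have lin: "l \<in> eigenvalues A" unfolding eigenvalues_def by (rule CollectI, rule exI[of _ u]) (simp add: u)
  have "e \<le> l" if e_in: "e \<in> eigenvalues A" for e
  proof -
    obtain v where v: "v \<noteq> 0" "A *v v = e *\<^sub>R v" using e_in unfolding eigenvalues_def by auto
    have "v \<bullet> (A *v v) \<le> l * (v \<bullet> v)" using b[rule_format, of v] .
    hence "e * (v \<bullet> v) \<le> l * (v \<bullet> v)" using v(2) by simp
    moreover have "v \<bullet> v > 0" using v by simp
    ultimately show ?thesis using mult_le_cancel_right_pos by blast
  qed
  hence "lambda_max A = l" unfolding lambda_max_def
    by (intro Max_eqI eig_finite[OF sym] lin) auto
  thus ?thesis using lin b by simp
qed

lemma lmin_props:
  fixes A :: "real^'n::finite^'n"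
  assumes sym: "transpose A = A"
  shows "lambda_min A \<in> eigenvalues A \<and> (\<forall>x. lambda_min A * (x \<bullet> x) \<le> x \<bullet> (A *v x))"
proof -
  have sym': "transpose ((-1) *\<^sub>R A) = (-1) *\<^sub>R A" using sym by (metis transpose_scalar)
  have mv: "((-1) *\<^sub>R A) *v x = - (A *v x)" for x
    by (metis scaleR_matrix_vector_assoc scaleR_minus1_left)
  obtain l u where u0: "u \<noteq> 0" "((-1) *\<^sub>R A) *v u = l *\<^sub>R u"
      and b0: "\<forall>x. x \<bullet> (((-1) *\<^sub>R A) *v x) \<le> l * (x \<bullet> x)"
    using rayleigh_max[OF sym'] by blast
  have u: "u \<noteq> 0" "A *v u = (-l) *\<^sub>R u" using u0 unfolding mv
    by (metis minus_minus scaleR_minus_left)+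
  have b: "\<forall>x. - (x \<bullet> (A *v x)) \<le> l * (x \<bullet> x)" using b0 unfolding mv inner_minus_right .
  have lin: "-l \<in> eigenvalues A" unfolding eigenvalues_def by (rule CollectI, rule exI[of _ u]) (simp add: u)
  have "-l \<le> e" if e_in: "e \<in> eigenvalues A" for e
  proof -
    obtain v where v: "v \<noteq> 0" "A *v v = e *\<^sub>R v" using e_in unfolding eigenvalues_def by auto
    have "- (v \<bullet> (A *v v)) \<le> l * (v \<bullet> v)" using b[rule_format, of v] .
    hence h: "(- e) * (v \<bullet> v) \<le> l * (v \<bullet> v)" using v(2) by simp
    have "v \<bullet> v > 0" using v by simp
    hence "- e \<le> l" using h mult_le_cancel_right_pos[of "v \<bullet> v" "-e" l] by simp
    thus ?thesis by linarith
  qed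
  hence "lambda_min A = -l" unfolding lambda_min_def
    by (intro Min_eqI eig_finite[OF sym] lin) auto
  moreover have "\<forall>x. -l * (x \<bullet> x) \<le> x \<bullet> (A *v x)"
  proof
    fix x have "- (x \<bullet> (A *v x)) \<le> l * (x \<bullet> x)" using b[rule_format, of x] .
    thus "-l * (x \<bullet> x) \<le> x \<bullet> (A *v x)" by simp
  qed
  ultimately show ?thesis using lin by simp
qed


lemma transpose_add: "transpose (A + B) = transpose A + transpose (B::real^'n^'m)"
  by (simp add: vec_eq_iff transpose_def)

lemma inner_UNIV_Plus:
  fixes f :: "'a::finite + 'b::finite \<Rightarrow> real"
  shows "(\<Sum>j\<in>(UNIV::('a + 'b) set). f j) = (\<Sum>k\<in>UNIV. f (Inl k)) + (\<Sum>k\<in>UNIV. f (Inr k))"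
  by (subst UNIV_Plus_UNIV[symmetric], subst sum.Plus) auto

lemma sq_aux: "0 \<le> a \<Longrightarrow> sqrt a * z * (sqrt a * z) = a * (z * (z::real))"
proof -
  assume "0 \<le> a"
  have "sqrt a * z * (sqrt a * z) = (sqrt a * sqrt a) * (z*z)" by (simp only: mult_ac)
  thus ?thesis using \<open>0 \<le> a\<close> by simp
qed

lemma Uh_bound:
  fixes U :: "real^'n::finite^'n" and Xf :: "real^'m::finite^'n"
  assumes "0 \<le> \<beta>" "\<beta> \<le> 1" "transpose U = U"
  shows "(y v* hybrid_Uh \<beta> U Xf) \<bullet> (y v* hybrid_Uh \<beta> U Xf)
     = (1 - \<beta>) * (y \<bullet> ((U ** U) *v y)) + \<beta> * (y \<bullet> ((Xf ** transpose Xf) *v y))"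
proof -
  let ?W = "y v* hybrid_Uh \<beta> U Xf"
  have c1: "?W $ Inl k = sqrt (1 - \<beta>) * (y v* U) $ k" for k
    by (simp add: vector_matrix_mult_def hybrid_Uh_def sum_distrib_left algebra_simps)
  have c2: "?W $ Inr k = sqrt \<beta> * (y v* Xf) $ k" for k
    by (simp add: vector_matrix_mult_def hybrid_Uh_def sum_distrib_left algebra_simps)
  have "?W \<bullet> ?W = (\<Sum>k\<in>UNIV. ?W $ Inl k * ?W $ Inl k) + (\<Sum>k\<in>UNIV. ?W $ Inr k * ?W $ Inr k)"
    unfolding inner_vec_def by (simp add: inner_UNIV_Plus)
  also have "\<dots> = (1 - \<beta>) * ((y v* U) \<bullet> (y v* U)) + \<beta> * ((y v* Xf) \<bullet> (y v* Xf))"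
    unfolding c1 c2 inner_vec_def using assms(1,2)
    by (simp add: sq_aux sum_distrib_left)
  also have "(y v* U) \<bullet> (y v* U) = y \<bullet> ((U ** U) *v y)"
    by (metis dot_lmul_matrix matrix_vector_mul_assoc transpose_matrix_vector assms(3))
  also have "(y v* Xf) \<bullet> (y v* Xf) = y \<bullet> ((Xf ** transpose Xf) *v y)"
    by (metis dot_lmul_matrix matrix_vector_mul_assoc transpose_matrix_vector)
  finally show ?thesis .
qed

lemma norm_bound_transfer:
  fixes M :: "real^'a::finite^'b::finite"
  assumes "\<And>y. (transpose M *v y) \<bullet> (transpose M *v y) \<le> c * (y \<bullet> y)"
  shows "(M *v x) \<bullet> (M *v x) \<le> c * (x \<bullet> x)"
proof -
  let ?w = "M *v x"
  define a where "a = ?w \<bullet> ?w"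
  have a0: "a \<ge> 0" by (simp add: a_def)
  have "a = x \<bullet> (transpose M *v ?w)" unfolding a_def by (metis inner_mat transpose_transpose)
  also have "\<dots> \<le> norm x * norm (transpose M *v ?w)" by (rule norm_cauchy_schwarz)
  finally have "a^2 \<le> (norm x * norm (transpose M *v ?w))^2" using a0 by (intro power_mono) auto
  also have "\<dots> = (x \<bullet> x) * ((transpose M *v ?w) \<bullet> (transpose M *v ?w))"
    by (simp add: power_mult_distrib power2_norm_eq_inner)
  also have "\<dots> \<le> (x \<bullet> x) * (c * a)" unfolding a_def
    by (intro mult_left_mono assms) auto
  finally have h: "a * a \<le> (c * (x \<bullet> x)) * a" by (simp add: power2_eq_square algebra_simps)
  show ?thesis
  proof (cases "a = 0")
    case True
    have "0 \<le> c * (x \<bullet> x)"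
    proof -
      have "0 \<le> (transpose M *v axis undefined 1) \<bullet> (transpose M *v axis undefined 1)" by (rule inner_ge_zero)
      also have "\<dots> \<le> c * (axis undefined 1 \<bullet> (axis undefined 1 :: real^'b))" by (rule assms)
      also have "\<dots> = c" by (simp add: inner_axis_axis)
      finally have "0 \<le> c" .
      hence "0 \<le> c * (x \<bullet> x)" by simp
      thus ?thesis .
    qed
    thus ?thesis using True a_def by simp
  next
    case False
    hence "a > 0" using a0 by simp
    thus ?thesis using h a_def by (simp add: mult_le_cancel_right)
  qed
qed


theorem theorem6:
  fixes \<beta> :: real
    and B0 U :: "real^'n::finite^'n"
    and Xf :: "real^'m::finite^'n"
    and H :: "real^'n^'q::finite"
    and R :: "real^'q^'q"
  assumes "0 \<le> \<beta>" and "\<beta> \<le> 1"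
    and "spd_mat B0"
    and "spd_mat U" and "U ** U = B0"
    and "spd_mat R"
  shows "1 \<le> cond_num (mat 1 + transpose (hybrid_Uh \<beta> U Xf) **
                         (transpose H ** matrix_inv R ** H) ** hybrid_Uh \<beta> U Xf)
       \<and> cond_num (mat 1 + transpose (hybrid_Uh \<beta> U Xf) **
                         (transpose H ** matrix_inv R ** H) ** hybrid_Uh \<beta> U Xf)
         \<le> 1 + ((1 - \<beta>) * lambda_max B0 + \<beta> * lambda_max (Xf ** transpose Xf))
                 * lambda_max (transpose H ** matrix_inv R ** H)"
proof -
  define Uh where "Uh = hybrid_Uh \<beta> U Xf"
  define Ri where "Ri = matrix_inv R"
  define K where "K = transpose H ** Ri ** H"
  define S where "S = mat 1 + transpose Uh ** K ** Uh"
  define c where "c = (1 - \<beta>) * lambda_max B0 + \<beta> * lambda_max (Xf ** transpose Xf)"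
  have symR: "transpose R = R" and posR: "\<And>x. x \<noteq> 0 \<Longrightarrow> 0 < x \<bullet> (R *v x)"
    using assms(6) unfolding spd_mat_def sym_mat_def by auto
  have symU: "transpose U = U" using assms(4) unfolding spd_mat_def sym_mat_def by auto
  have symB: "transpose B0 = B0" using assms(3) unfolding spd_mat_def sym_mat_def by auto
  have symP: "transpose (Xf ** transpose Xf) = Xf ** transpose Xf"
    by (simp add: matrix_transpose_mul)
  have "\<forall>x. R *v x = 0 \<longrightarrow> x = 0" using posR by fastforce
  hence "invertible R" using matrix_left_invertible_ker invertible_left_inverse by blast
  hence RRi: "R ** Ri = mat 1 \<and> Ri ** R = mat 1"
    unfolding Ri_def matrix_inv_def invertible_def by (rule someI_ex)
  have "transpose Ri ** R = mat 1"
    by (metis RRi matrix_transpose_mul symR transpose_mat)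
  hence symRi: "transpose Ri = Ri"
    by (metis RRi matrix_mul_assoc matrix_mul_lid matrix_mul_rid)
  have posRi: "0 \<le> y \<bullet> (Ri *v y)" for y
  proof -
    define z where "z = Ri *v y"
    have "y = R *v z" by (simp add: z_def matrix_vector_mul_assoc RRi)
    hence "y \<bullet> (Ri *v y) = z \<bullet> (R *v z)" by (simp add: z_def inner_commute)
    thus ?thesis using posR[of z] by (cases "z = 0") auto
  qed
  have symK: "transpose K = K"
    by (simp add: K_def matrix_transpose_mul matrix_mul_assoc symRi)
  have posK: "0 \<le> x \<bullet> (K *v x)" for x
  proof -
    have "x \<bullet> (K *v x) = (H *v x) \<bullet> (Ri *v (H *v x))"
      unfolding K_def by (metis inner_mat matrix_vector_mul_assoc transpose_transpose)
    thus ?thesis using posRi by simp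
  qed
  have symS: "transpose S = S"
    by (simp add: S_def transpose_add matrix_transpose_mul matrix_mul_assoc symK)
  have quadS: "x \<bullet> (S *v x) = x \<bullet> x + (Uh *v x) \<bullet> (K *v (Uh *v x))" for x
  proof -
    have "x \<bullet> ((transpose Uh ** K ** Uh) *v x) = (Uh *v x) \<bullet> (K *v (Uh *v x))"
      by (metis inner_mat matrix_vector_mul_assoc transpose_transpose)
    thus ?thesis by (simp add: S_def matrix_vector_mult_add_rdistrib inner_add_right)
  qed
  have cb: "(transpose Uh *v y) \<bullet> (transpose Uh *v y) \<le> c * (y \<bullet> y)" for y
  proof -
    have "(transpose Uh *v y) \<bullet> (transpose Uh *v y)
       = (1 - \<beta>) * (y \<bullet> (B0 *v y)) + \<beta> * (y \<bullet> ((Xf ** transpose Xf) *v y))"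
      using Uh_bound[OF assms(1,2) symU, of y Xf] by (simp add: Uh_def assms(5))
    also have "\<dots> \<le> (1 - \<beta>) * (lambda_max B0 * (y \<bullet> y)) + \<beta> * (lambda_max (Xf ** transpose Xf) * (y \<bullet> y))"
      using lmax_props[OF symB] lmax_props[OF symP] assms(1,2)
      by (intro add_mono mult_left_mono) auto
    finally show ?thesis by (simp add: c_def algebra_simps)
  qed
  have Uhb: "(Uh *v x) \<bullet> (Uh *v x) \<le> c * (x \<bullet> x)" for x
    by (rule norm_bound_transfer, rule cb)
  have Kmax: "lambda_max K \<in> eigenvalues K" and Kb: "\<And>x. x \<bullet> (K *v x) \<le> lambda_max K * (x \<bullet> x)"
    using lmax_props[OF symK] by auto
  have K0: "0 \<le> lambda_max K"
  proof -
    obtain v where v: "v \<noteq> 0" "K *v v = lambda_max K *\<^sub>R v" using Kmax unfolding eigenvalues_def by blast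
    have "0 \<le> lambda_max K * (v \<bullet> v)" using posK[of v] v by simp
    moreover have "v \<bullet> v > 0" using v by simp
    ultimately show ?thesis by (simp add: zero_le_mult_iff)
  qed
  have Smin: "1 \<le> lambda_min S"
  proof -
    obtain v where v: "v \<noteq> 0" "S *v v = lambda_min S *\<^sub>R v"
      using lmin_props[OF symS] unfolding eigenvalues_def by blast
    have "lambda_min S * (v \<bullet> v) = v \<bullet> (S *v v)" using v by simp
    also have "\<dots> \<ge> 1 * (v \<bullet> v)" using quadS[of v] posK[of "Uh *v v"] by simp
    finally have "1 * (v \<bullet> v) \<le> lambda_min S * (v \<bullet> v)" .
    moreover have "v \<bullet> v > 0" using v by simp
    ultimately show ?thesis by (simp add: mult_le_cancel_right)
  qed
  obtain v where v: "v \<noteq> 0" "S *v v = lambda_max S *\<^sub>R v"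
    using lmax_props[OF symS] unfolding eigenvalues_def by blast
  have vv: "v \<bullet> v > 0" using v by simp
  have Smm: "lambda_min S \<le> lambda_max S"
  proof -
    have "lambda_min S * (v \<bullet> v) \<le> v \<bullet> (S *v v)" using lmin_props[OF symS] by blast
    also have "\<dots> = lambda_max S * (v \<bullet> v)" using v by simp
    finally show ?thesis using vv by (simp add: mult_le_cancel_right)
  qed
  have Smax: "lambda_max S \<le> 1 + c * lambda_max K"
  proof -
    have "lambda_max S * (v \<bullet> v) = v \<bullet> (S *v v)" using v by simp
    also have "\<dots> = v \<bullet> v + (Uh *v v) \<bullet> (K *v (Uh *v v))" by (rule quadS)
    also have "\<dots> \<le> v \<bullet> v + lambda_max K * ((Uh *v v) \<bullet> (Uh *v v))" using Kb by simp
    also have "\<dots> \<le> v \<bullet> v + lambda_max K * (c * (v \<bullet> v))"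
      using Uhb[of v] K0 by (intro add_left_mono mult_left_mono) auto
    also have "\<dots> = (1 + c * lambda_max K) * (v \<bullet> v)" by (simp add: algebra_simps)
    finally show ?thesis using vv by (simp add: mult_le_cancel_right)
  qed
  have "1 \<le> lambda_max S / lambda_min S" using Smin Smm by simp
  moreover have "lambda_max S / lambda_min S \<le> lambda_max S"
    using Smin Smm by (simp add: divide_le_eq mult_le_cancel_left1 order_trans[OF zero_le_one]) 
  ultimately show ?thesis using Smax
    unfolding cond_num_def S_def K_def Ri_def Uh_def c_def by simp
qed

end
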